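(* Let $\mu$ be a probabilistic frame for $\mathbb{R}^d$ with frame operator $S_\mu$, and let $h:\mathbb{R}^d\to\mathbb{R}^d$ be any measurable function with $\int_{\mathbb{R}^d}\|h(x)\|_2^2\,d\mu(x)<\infty$. Define $\psi_h:\mathbb{R}^d\to\mathbb{R}^d$ by $$\psi_h(x)=S_\mu^{-1}x+h(x)-\int_{\mathbb{R}^d}\langle S_\mu^{-1}x,y\rangle h(y)\,d\mu(y).$$ Then the pushforward $(\psi_h)_{\#}\mu$ is a transport dual to $\mu$, i.e. $(\psi_h)_{\#}\mu\in D_\mu$.
   Context: $P_2(\mathbb{R}^d)$ is the set of Borel probability measures $\mu$ on $\mathbb{R}^d$ with $\int\|x\|^2d\mu(x)<\infty$. A probability measure $\mu$ on $\mathbb{R}^d$ is a probabilistic frame if there exist $0<A\le B<\infty$ with $A\|x\|^2\le\int\langle x,y\rangle^2d\mu(y)\le B\|x\|^2$ for all $x\in\mathbb{R}^d$ (equivalently, $\mu\in P_2(\mathbb{R}^d)$ and the linear span of its support is $\mathbb{R}^d$). Its frame operator is the positive definite matrix $S_\mu=\int_{\mathbb{R}^d}xx^\top d\mu(x)$. For probability measures $\mu,\nu$, $\Gamma(\mu,\nu)$ denotes the set of couplings (probability measures on $\mathbb{R}^d\times\mathbb{R}^d$ with marginals $\mu$ and $\nu$). A measure $\nu\in P_2(\mathbb{R}^d)$ is a transport dual to the probabilistic frame $\mu$ if there exists $\gamma\in\Gamma(\mu,\nu)$ with $\iint xy^\top d\gamma(x,y)=I$; $D_\mu$ denotes the set of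 all transport duals to $\mu$. $T_\#\mu$ denotes the pushforward of $\mu$ by $T$. *)

theory Defs
  imports "HOL-Probability.Probability"
begin

definition P2 :: "(real^'n) measure \<Rightarrow> bool" where
  "P2 \<mu> \<longleftrightarrow> prob_space \<mu> \<and> sets \<mu> = sets borel \<and>
     (\<integral>\<^sup>+ x. ennreal ((norm x)\<^sup>2) \<partial>\<mu>) < \<infinity>"

definition prob_frame :: "(real^'n) measure \<Rightarrow> bool" where
  "prob_frame \<mu> \<longleftrightarrow> prob_space \<mu> \<and> sets \<mu> = sets borel \<and>
     (\<exists>A B. 0 < A \<and> A \<le> B \<and> B < \<infinity> \<and>
        (\<forall>x::real^'n. ennreal A * ennreal ((norm x)\<^sup>2) \<le> (\<integral>\<^sup>+ y. ennreal ((x \<bullet> y)\<^sup>2) \<partial>\<mu>)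
           \<and> (\<integral>\<^sup>+ y. ennreal ((x \<bullet> y)\<^sup>2) \<partial>\<mu>) \<le> ennreal B * ennreal ((norm x)\<^sup>2)))"

definition frame_operator :: "(real^'n) measure \<Rightarrow> real^'n^'n" where
  "frame_operator \<mu> = (\<chi> i j. \<integral> x. x $ i * x $ j \<partial>\<mu>)"

definition couplings :: "(real^'n) measure \<Rightarrow> (real^'n) measure \<Rightarrow> ((real^'n) \<times> (real^'n)) measure set" where
  "couplings \<mu> \<nu> = {\<gamma>. prob_space \<gamma> \<and> sets \<gamma> = sets borel \<and>
      distr \<gamma> borel fst = \<mu> \<and> distr \<gamma> borel snd = \<nu>}"

definition transport_duals :: "(real^'n) measure \<Rightarrow> (real^'n) measure set" where
  "transport_duals \<mu> = {\<nu>. P2 \<nu> \<and>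
      (\<exists>\<gamma>\<in>couplings \<mu> \<nu>. (\<chi> i j. \<integral> p. fst p $ i * snd p $ j \<partial>\<gamma>) = mat 1)}"

end

theory Submission
  imports Defs
begin


lemma ab_le: "0 \<le> (a::real) \<Longrightarrow> 0 \<le> b \<Longrightarrow> a*b \<le> a\<^sup>2 + b\<^sup>2"
  using sum_squares_bound[of a b] mult_nonneg_nonneg[of a b] by linarith

lemma sq_sum_le: "(a+b)\<^sup>2 \<le> 2*a\<^sup>2 + 2*(b::real)\<^sup>2"
  using power2_sum[of a b] sum_squares_bound[of a b] by linarith

locale pf =
  fixes \<mu> :: "(real^'n) measure" and h :: "real^'n \<Rightarrow> real^'n"
  assumes frame: "prob_frame \<mu>"
    and hm: "h \<in> borel_measurable borel"
    and hL2: "(\<integral>\<^sup>+ x. ennreal ((norm (h x))\<^sup>2) \<partial>\<mu>) < \<infinity>"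
begin

lemma ps: "prob_space \<mu>"
  by (rule frame[unfolded prob_frame_def, THEN conjunct1])

lemma sm: "sets \<mu> = sets borel"
  by (rule frame[unfolded prob_frame_def, THEN conjunct2, THEN conjunct1])

lemma frame_ex: "\<exists>A B. 0 < A \<and> A \<le> B \<and> B < \<infinity> \<and>
        (\<forall>x::real^'n. ennreal A * ennreal ((norm x)\<^sup>2) \<le> (\<integral>\<^sup>+ y. ennreal ((x \<bullet> y)\<^sup>2) \<partial>\<mu>)
           \<and> (\<integral>\<^sup>+ y. ennreal ((x \<bullet> y)\<^sup>2) \<partial>\<mu>) \<le> ennreal B * ennreal ((norm x)\<^sup>2))"
  by (rule frame[unfolded prob_frame_def, THEN conjunct2, THEN conjunct2])

lemma frame_bounds: obtains A B where "0 < A"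
   "\<And>x. ennreal A * ennreal ((norm x)\<^sup>2) \<le> (\<integral>\<^sup>+ y. ennreal ((x \<bullet> y)\<^sup>2) \<partial>\<mu>)"
   "\<And>x. (\<integral>\<^sup>+ y. ennreal ((x \<bullet> y)\<^sup>2) \<partial>\<mu>) \<le> ennreal B * ennreal ((norm x)\<^sup>2)"
proof -
  from frame_ex obtain A B where H: "0 < A \<and> A \<le> B \<and> B < \<infinity> \<and>
        (\<forall>x::real^'n. ennreal A * ennreal ((norm x)\<^sup>2) \<le> (\<integral>\<^sup>+ y. ennreal ((x \<bullet> y)\<^sup>2) \<partial>\<mu>)
           \<and> (\<integral>\<^sup>+ y. ennreal ((x \<bullet> y)\<^sup>2) \<partial>\<mu>) \<le> ennreal B * ennreal ((norm x)\<^sup>2))"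
    by (elim exE) (rule that)
  show ?thesis
  proof (rule that[of A B])
    show "0 < A" using H by (elim conjE)
    fix x :: "real^'n"
    have "ennreal A * ennreal ((norm x)\<^sup>2) \<le> (\<integral>\<^sup>+ y. ennreal ((x \<bullet> y)\<^sup>2) \<partial>\<mu>)
           \<and> (\<integral>\<^sup>+ y. ennreal ((x \<bullet> y)\<^sup>2) \<partial>\<mu>) \<le> ennreal B * ennreal ((norm x)\<^sup>2)"
      using H by (elim conjE) (erule spec)
    then show "ennreal A * ennreal ((norm x)\<^sup>2) \<le> (\<integral>\<^sup>+ y. ennreal ((x \<bullet> y)\<^sup>2) \<partial>\<mu>)"
      and "(\<integral>\<^sup>+ y. ennreal ((x \<bullet> y)\<^sup>2) \<partial>\<mu>) \<le> ennreal B * ennreal ((norm x)\<^sup>2)"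
      by (blast dest: conjunct1 conjunct2)+
  qed
qed

lemma meas_eq: "measurable \<mu> N = measurable borel N"
  by (rule measurable_cong_sets[OF sm refl])

declare hm[measurable]

lemma vn_meas[measurable]: "(\<lambda>x::real^'n. x $ i) \<in> borel_measurable borel"
  by (intro borel_measurable_continuous_onI linear_continuous_on bounded_linear_vec_nth)

lemma to_mu: "f \<in> measurable borel N \<Longrightarrow> f \<in> measurable \<mu> N"
  by (simp add: meas_eq)

lemma sqc_meas: "(\<lambda>x::real^'n. ennreal ((x$i)\<^sup>2)) \<in> borel_measurable borel" by measurable
lemma n2_meas: "(\<lambda>x::real^'n. ennreal ((norm x)\<^sup>2)) \<in> borel_measurable borel" by measurable
lemma hn2_meas: "(\<lambda>x. ennreal ((norm (h x))\<^sup>2)) \<in> borel_measurable borel" by measurable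

lemma hmu: "h \<in> borel_measurable \<mu>" using hm by (simp add: meas_eq)

lemma comp_fin: "(\<integral>\<^sup>+ y. ennreal ((y $ i)\<^sup>2) \<partial>\<mu>) < \<infinity>"
proof -
  obtain A B where AB: "\<And>x. (\<integral>\<^sup>+ y. ennreal ((x \<bullet> y)\<^sup>2) \<partial>\<mu>) \<le> ennreal B * ennreal ((norm x)\<^sup>2)"
    using frame_bounds by metis
  have "(\<integral>\<^sup>+ y. ennreal ((y $ i)\<^sup>2) \<partial>\<mu>) = (\<integral>\<^sup>+ y. ennreal ((axis i 1 \<bullet> y)\<^sup>2) \<partial>\<mu>)"
    by (simp add: inner_axis')
  also have "\<dots> \<le> ennreal B * ennreal ((norm (axis i (1::real)))\<^sup>2)" by (rule AB)
  also have "\<dots> < \<infinity>" by simp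
  finally show ?thesis .
qed

lemma m2: "(\<integral>\<^sup>+ x. ennreal ((norm x)\<^sup>2) \<partial>\<mu>) < \<infinity>"
proof -
  have "(\<integral>\<^sup>+ x. ennreal ((norm x)\<^sup>2) \<partial>\<mu>) = (\<integral>\<^sup>+ x. (\<Sum>i\<in>UNIV. ennreal ((x $ i)\<^sup>2)) \<partial>\<mu>)"
  proof (rule nn_integral_cong)
    fix x :: "real^'n"
    have "(norm x)\<^sup>2 = (\<Sum>i\<in>UNIV. (x$i)\<^sup>2)"
      by (simp only: power2_norm_eq_inner) (simp add: inner_vec_def power2_eq_square)
    then show "ennreal ((norm x)\<^sup>2) = (\<Sum>i\<in>UNIV. ennreal ((x $ i)\<^sup>2))"
      by simp
  qed
  also have "\<dots> = (\<Sum>i\<in>UNIV. \<integral>\<^sup>+ x. ennreal ((x $ i)\<^sup>2) \<partial>\<mu>)"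
    by (rule nn_integral_sum) (rule to_mu[OF sqc_meas])
  also have "\<dots> < \<infinity>" using comp_fin by (simp add: sum_Pinfty less_top)
  finally show ?thesis .
qed

lemma fin: assumes "0 \<le> C"
  shows "(\<integral>\<^sup>+ x. ennreal (C * ((norm x)\<^sup>2 + (norm (h x))\<^sup>2)) \<partial>\<mu>) < \<infinity>"
proof -
  have "(\<integral>\<^sup>+ x. ennreal (C * ((norm x)\<^sup>2 + (norm (h x))\<^sup>2)) \<partial>\<mu>)
      = (\<integral>\<^sup>+ x. ennreal C * (ennreal ((norm x)\<^sup>2) + ennreal ((norm (h x))\<^sup>2)) \<partial>\<mu>)"
    by (simp add: ennreal_mult assms ennreal_plus)
  also have "\<dots> = ennreal C * ((\<integral>\<^sup>+ x. ennreal ((norm x)\<^sup>2) \<partial>\<mu>) + (\<integral>\<^sup>+ x. ennreal ((norm (h x))\<^sup>2) \<partial>\<mu>))"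
  proof -
    have a: "(\<lambda>x. ennreal ((norm x)\<^sup>2)) \<in> borel_measurable \<mu>"
      by (rule to_mu[OF n2_meas])
    have b: "(\<lambda>x. ennreal ((norm (h x))\<^sup>2)) \<in> borel_measurable \<mu>"
      by (rule to_mu[OF hn2_meas])
    have ab: "(\<lambda>x. ennreal ((norm x)\<^sup>2) + ennreal ((norm (h x))\<^sup>2)) \<in> borel_measurable \<mu>"
      by (rule borel_measurable_add[OF a b])
    show ?thesis
      by (simp only: nn_integral_cmult[OF ab] nn_integral_add[OF a b])
  qed
  also have "\<dots> < \<infinity>" using m2 hL2 by (simp add: ennreal_mult_less_top)
  finally show ?thesis .
qed

lemma integ:
  fixes f :: "real^'n \<Rightarrow> 'b::{banach, second_countable_topology}"
  assumes "f \<in> borel_measurable borel" "0 \<le> C" "\<And>x. norm (f x) \<le> C * ((norm x)\<^sup>2 + (norm (h x))\<^sup>2)"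
  shows "integrable \<mu> f"
proof (rule integrableI_bounded)
  show "f \<in> borel_measurable \<mu>" using assms(1) by (simp add: meas_eq)
  have "(\<integral>\<^sup>+ x. ennreal (norm (f x)) \<partial>\<mu>) \<le> (\<integral>\<^sup>+ x. ennreal (C * ((norm x)\<^sup>2 + (norm (h x))\<^sup>2)) \<partial>\<mu>)"
    by (rule nn_integral_mono) (simp add: assms(3) ennreal_leI)
  then show "(\<integral>\<^sup>+ x. ennreal (norm (f x)) \<partial>\<mu>) < \<infinity>" using fin[OF assms(2)] by order
qed

end

context pf begin



lemma hvn_meas[measurable]: "(\<lambda>x. h x $ i) \<in> borel_measurable borel"
  using measurable_compose[OF hm vn_meas] by simp

abbreviation "S \<equiv> frame_operator \<mu>"

lemma int_xx: "integrable \<mu> (\<lambda>x. x$i * x$j)"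
proof (rule integ[where C=1])
  show "(\<lambda>x::real^'n. x$i * x$j) \<in> borel_measurable borel" by measurable
  fix x :: "real^'n"
  have "\<bar>x$i\<bar> * \<bar>x$j\<bar> \<le> norm x * norm x"
    by (intro mult_mono component_le_norm_cart) auto
  then show "norm (x$i * x$j) \<le> 1 * ((norm x)\<^sup>2 + (norm (h x))\<^sup>2)"
    by (simp add: abs_mult power2_eq_square, insert zero_le_square[of "norm (h x)"], linarith)
qed simp

lemma int_xh: "integrable \<mu> (\<lambda>x. x$i * h x $ j)"
proof (rule integ[where C=1])
  show "(\<lambda>x. x$i * h x $ j) \<in> borel_measurable borel" by measurable
  fix x :: "real^'n"
  have "\<bar>x$i\<bar> * \<bar>h x$j\<bar> \<le> norm x * norm (h x)"
    by (intro mult_mono component_le_norm_cart) auto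
  moreover have "norm x * norm (h x) \<le> (norm x)\<^sup>2 + (norm (h x))\<^sup>2"
    by (intro ab_le norm_ge_zero)
  ultimately show "norm (x$i * h x $ j) \<le> 1 * ((norm x)\<^sup>2 + (norm (h x))\<^sup>2)"
    by (simp add: abs_mult)
qed simp

lemma S_entry: "S $ i $ j = (\<integral>x. x$i * x$j \<partial>\<mu>)"
  by (simp add: frame_operator_def)

lemma S_sym: "transpose S = S"
  by (simp add: transpose_def frame_operator_def mult.commute)

lemma L: "(\<integral>x. x$i * (A *v x)$j \<partial>\<mu>) = (S ** transpose A) $ i $ j"
proof -
  have "(\<integral>x. x$i * (A *v x)$j \<partial>\<mu>) = (\<integral>x. (\<Sum>k\<in>UNIV. A$j$k * (x$i * x$k)) \<partial>\<mu>)"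
    by (rule Bochner_Integration.integral_cong)
       (simp_all add: matrix_vector_mult_def sum_distrib_left mult.assoc mult.left_commute)
  also have "\<dots> = (\<Sum>k\<in>UNIV. A$j$k * (\<integral>x. x$i * x$k \<partial>\<mu>))"
    by (simp add: int_xx)
  also have "\<dots> = (S ** transpose A) $ i $ j"
    by (simp add: matrix_matrix_mult_def transpose_def frame_operator_def mult.commute)
  finally show ?thesis .
qed

lemma quad: "v \<bullet> (S *v v) = (\<integral>x. (v \<bullet> x)\<^sup>2 \<partial>\<mu>)"
proof -
  have "(\<integral>x. (v \<bullet> x)\<^sup>2 \<partial>\<mu>) = (\<integral>x. (\<Sum>i\<in>UNIV. \<Sum>j\<in>UNIV. (v$i * v$j) * (x$i * x$j)) \<partial>\<mu>)"
    by (rule Bochner_Integration.integral_cong)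
       (simp_all add: inner_vec_def power2_eq_square sum_product mult_ac)
  also have "\<dots> = (\<Sum>i\<in>UNIV. \<Sum>j\<in>UNIV. (v$i * v$j) * (\<integral>x. x$i * x$j \<partial>\<mu>))"
    by (simp add: int_xx)
  also have "\<dots> = v \<bullet> (S *v v)"
    by (simp add: inner_vec_def matrix_vector_mult_def frame_operator_def sum_distrib_left mult_ac)
  finally show ?thesis by simp
qed

lemma S_inj: assumes "S *v v = 0" shows "v = 0"
proof (rule ccontr)
  assume "v \<noteq> 0"
  obtain A B where AB: "0 < A"
    "\<forall>x::real^'n. ennreal A * ennreal ((norm x)\<^sup>2) \<le> (\<integral>\<^sup>+ y. ennreal ((x \<bullet> y)\<^sup>2) \<partial>\<mu>)"
    using frame unfolding prob_frame_def by blast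
  have ii: "integrable \<mu> (\<lambda>x. (v \<bullet> x)\<^sup>2)"
  proof -
    have "(\<lambda>x. (v \<bullet> x)\<^sup>2) = (\<lambda>x. \<Sum>i\<in>UNIV. \<Sum>j\<in>UNIV. (v$i * v$j) * (x$i * x$j))"
      by (simp add: fun_eq_iff inner_vec_def power2_eq_square sum_product mult_ac)
    then show ?thesis by (auto intro!: integrable_sum integrable_mult_right int_xx)
  qed
  have "(\<integral>\<^sup>+ y. ennreal ((v \<bullet> y)\<^sup>2) \<partial>\<mu>) = ennreal (\<integral>y. (v \<bullet> y)\<^sup>2 \<partial>\<mu>)"
    by (rule nn_integral_eq_integral[OF ii]) auto
  also have "\<dots> = 0" using quad[of v] assms by simp
  finally have "ennreal A * ennreal ((norm v)\<^sup>2) \<le> 0" using AB(2) by metis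
  moreover have "0 < A * (norm v)\<^sup>2" using AB(1) \<open>v \<noteq> 0\<close> by simp
  ultimately show False
    by (metis AB(1) ennreal_eq_0_iff ennreal_mult' le_zero_eq linorder_not_le less_le)
qed

definition "M = matrix_inv S"

lemma M_inv: "S ** M = mat 1" "M ** S = mat 1"
proof -
  have "\<exists>B. B ** S = mat 1" using S_inj matrix_left_invertible_ker by blast
  then have "invertible S" using invertible_left_inverse by blast
  then have "S ** M = mat 1 \<and> M ** S = mat 1"
    unfolding M_def matrix_inv_def invertible_def by (rule someI_ex)
  then show "S ** M = mat 1" "M ** S = mat 1" by auto
qed

lemma M_sym: "transpose M = M"
proof -
  have "transpose M ** S = mat 1"
    by (metis M_inv(1) S_sym matrix_transpose_mul transpose_mat)
  have "transpose M = transpose M ** (S ** M)" by (simp add: M_inv)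
  also have "\<dots> = (transpose M ** S) ** M" by (simp add: matrix_mul_assoc)
  also have "\<dots> = M" by (simp add: \<open>transpose M ** S = mat 1\<close>)
  finally show ?thesis .
qed

end

context pf begin

lemma gen_ineq: "0 \<le> (a::real) \<Longrightarrow> 0 \<le> b \<Longrightarrow> 0 \<le> c \<Longrightarrow> 2*(c*a) + 2*b \<le> (2*c+2)*(a+b)"
proof -
  assume "0 \<le> a" "0 \<le> b" "0 \<le> c"
  then have "0 \<le> c*b" by simp
  moreover have "(2*c+2)*(a+b) = 2*(c*a) + 2*b + (2*a + 2*(c*b))" by (simp add: algebra_simps)
  ultimately show ?thesis using \<open>0 \<le> a\<close> by linarith
qed

definition "C = (\<chi> k j. \<integral>y. y$k * h y $ j \<partial>\<mu>)"
definition "D = transpose C ** M"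
definition "\<psi> = (\<lambda>x. M *v x + h x - D *v x)"

lemma mv_meas[measurable]: "(\<lambda>x::real^'n. A *v x) \<in> borel_measurable borel"
  by (intro borel_measurable_continuous_onI linear_continuous_on matrix_vector_mul_bounded_linear)

lemma psi_meas[measurable]: "\<psi> \<in> borel_measurable borel"
  unfolding \<psi>_def by (intro borel_measurable_diff borel_measurable_add mv_meas hm)

lemma int_T: "integrable \<mu> (\<lambda>y. (a \<bullet> y) *\<^sub>R h y)"
proof (rule integ[where C="norm a"])
  show "(\<lambda>y. (a \<bullet> y) *\<^sub>R h y) \<in> borel_measurable borel"
    by (intro borel_measurable_scaleR hm borel_measurable_continuous_onI continuous_intros)
  fix y :: "real^'n"
  have "\<bar>a \<bullet> y\<bar> * norm (h y) \<le> (norm a * norm y) * norm (h y)"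
    by (intro mult_right_mono Cauchy_Schwarz_ineq2) auto
  also have "\<dots> \<le> norm a * ((norm y)\<^sup>2 + (norm (h y))\<^sup>2)"
    unfolding mult.assoc
    using ab_le[OF norm_ge_zero norm_ge_zero, of y "h y"] by (intro mult_left_mono) auto
  finally show "norm ((a \<bullet> y) *\<^sub>R h y) \<le> norm a * ((norm y)\<^sup>2 + (norm (h y))\<^sup>2)" by simp
qed simp

lemma T_eq: "(\<integral>y. (a \<bullet> y) *\<^sub>R h y \<partial>\<mu>) = transpose C *v a"
proof (subst vec_eq_iff, intro allI)
  fix j
  have "(\<integral>y. (a \<bullet> y) *\<^sub>R h y \<partial>\<mu>) $ j = (\<integral>y. ((a \<bullet> y) *\<^sub>R h y) $ j \<partial>\<mu>)"
    by (rule integral_bounded_linear[OF bounded_linear_vec_nth int_T, symmetric])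
  also have "\<dots> = (\<integral>y. (\<Sum>k\<in>UNIV. a$k * (y$k * h y $ j)) \<partial>\<mu>)"
    by (rule Bochner_Integration.integral_cong)
       (simp_all add: inner_vec_def sum_distrib_left sum_distrib_right mult_ac)
  also have "\<dots> = (\<Sum>k\<in>UNIV. a$k * (\<integral>y. y$k * h y $ j \<partial>\<mu>))"
    by (simp add: int_xh)
  also have "\<dots> = (transpose C *v a) $ j"
    by (simp add: matrix_vector_mult_def transpose_def C_def mult.commute)
  finally show "(\<integral>y. (a \<bullet> y) *\<^sub>R h y \<partial>\<mu>) $ j = (transpose C *v a) $ j" .
qed

lemma fun_eq: "(\<lambda>x. matrix_inv S *v x + h x - (\<integral> y. ((matrix_inv S *v x) \<bullet> y) *\<^sub>R h y \<partial>\<mu>)) = \<psi>"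
  by (auto simp: fun_eq_iff \<psi>_def T_eq D_def matrix_vector_mul_assoc M_def[symmetric])

lemma psi_bound: "\<exists>K\<ge>0. \<forall>x. norm ((norm (\<psi> x))\<^sup>2) \<le> K * ((norm x)\<^sup>2 + (norm (h x))\<^sup>2)"
proof -
  obtain K1 where K1: "K1 > 0" "\<And>x. norm (M *v x) \<le> norm x * K1"
    using bounded_linear.pos_bounded[OF matrix_vector_mul_bounded_linear[of M]] by blast
  obtain K2 where K2: "K2 > 0" "\<And>x. norm (D *v x) \<le> norm x * K2"
    using bounded_linear.pos_bounded[OF matrix_vector_mul_bounded_linear[of D]] by blast
  have "norm ((norm (\<psi> x))\<^sup>2) \<le> (2*(K1+K2)\<^sup>2 + 2) * ((norm x)\<^sup>2 + (norm (h x))\<^sup>2)" for x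
  proof -
    have "norm (\<psi> x) \<le> norm (M *v x) + norm (h x) + norm (D *v x)"
      unfolding \<psi>_def using norm_triangle_ineq4[of "M *v x + h x" "D *v x"]
        norm_triangle_ineq[of "M *v x" "h x"] by linarith
    also have "\<dots> \<le> (K1+K2) * norm x + norm (h x)" using K1(2)[of x] K2(2)[of x]
      by (simp add: algebra_simps)
    finally have a: "norm (\<psi> x) \<le> (K1+K2) * norm x + norm (h x)" .
    have "(norm (\<psi> x))\<^sup>2 \<le> ((K1+K2) * norm x + norm (h x))\<^sup>2"
      using a by (intro power_mono) auto
    also have "\<dots> \<le> 2 * ((K1+K2) * norm x)\<^sup>2 + 2 * (norm (h x))\<^sup>2"
      by (rule sq_sum_le)
    also have "\<dots> \<le> (2*(K1+K2)\<^sup>2 + 2) * ((norm x)\<^sup>2 + (norm (h x))\<^sup>2)"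
      unfolding power_mult_distrib by (rule gen_ineq) auto
    finally show ?thesis by simp
  qed
  then show ?thesis by (intro exI[of _ "2*(K1+K2)\<^sup>2 + 2"]) auto
qed

lemma int_xA: "integrable \<mu> (\<lambda>x. x$i * (A *v x)$j)"
proof -
  have "(\<lambda>x. x$i * (A *v x)$j) = (\<lambda>x. \<Sum>k\<in>UNIV. A$j$k * (x$i * x$k))"
    by (simp add: fun_eq_iff matrix_vector_mult_def sum_distrib_left mult_ac)
  then show ?thesis by (auto intro!: integrable_sum integrable_mult_right int_xx)
qed

lemma cross: "(\<integral>x. x$i * \<psi> x $ j \<partial>\<mu>) = mat 1 $ i $ j"
proof -
  have "(\<integral>x. x$i * \<psi> x $ j \<partial>\<mu>) =
     (\<integral>x. x$i * (M *v x)$j + x$i * h x $ j - x$i * (D *v x)$j \<partial>\<mu>)"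
    by (rule Bochner_Integration.integral_cong) (simp_all add: \<psi>_def algebra_simps)
  also have "\<dots> = (\<integral>x. x$i * (M *v x)$j \<partial>\<mu>) + (\<integral>x. x$i * h x $ j \<partial>\<mu>) - (\<integral>x. x$i * (D *v x)$j \<partial>\<mu>)"
    by (simp add: int_xA int_xh)
  also have "\<dots> = (S ** M) $ i $ j + C $ i $ j - ((S ** M) ** C) $ i $ j"
    by (simp add: L M_sym D_def matrix_transpose_mul matrix_mul_assoc C_def)
  also have "\<dots> = mat 1 $ i $ j" by (simp add: M_inv)
  finally show ?thesis .
qed

end

context pf begin

lemma pair_meas: "(\<lambda>x. (x, \<psi> x)) \<in> measurable borel borel"
  using measurable_Pair[OF measurable_ident_sets[OF refl] psi_meas] by (simp add: borel_prod)

lemma main: "distr \<mu> borel \<psi> \<in> transport_duals \<mu>"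
proof -
  have pm: "\<psi> \<in> measurable \<mu> borel" by (rule to_mu[OF psi_meas])
  have pm2: "(\<lambda>x. (x, \<psi> x)) \<in> measurable \<mu> borel" by (rule to_mu[OF pair_meas])
  have P2: "P2 (distr \<mu> borel \<psi>)"
    unfolding P2_def
  proof (intro conjI)
    show "prob_space (distr \<mu> borel \<psi>)" by (rule prob_space.prob_space_distr[OF ps pm])
    show "sets (distr \<mu> borel \<psi>) = sets borel" by simp
    obtain K where K: "K \<ge> 0" "\<And>x. norm ((norm (\<psi> x))\<^sup>2) \<le> K * ((norm x)\<^sup>2 + (norm (h x))\<^sup>2)"
      using psi_bound by blast
    have "(\<integral>\<^sup>+ y. ennreal ((norm y)\<^sup>2) \<partial>distr \<mu> borel \<psi>) = (\<integral>\<^sup>+ x. ennreal ((norm (\<psi> x))\<^sup>2) \<partial>\<mu>)"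
      by (rule nn_integral_distr[OF pm]) (subst measurable_cong_sets[OF sets_distr refl], rule n2_meas)
    also have "\<dots> \<le> (\<integral>\<^sup>+ x. ennreal (K * ((norm x)\<^sup>2 + (norm (h x))\<^sup>2)) \<partial>\<mu>)"
      using K(2) by (intro nn_integral_mono ennreal_leI) (metis real_norm_def abs_le_D1)
    also have "\<dots> < \<infinity>" by (rule fin[OF K(1)])
    finally show "(\<integral>\<^sup>+ y. ennreal ((norm y)\<^sup>2) \<partial>distr \<mu> borel \<psi>) < \<infinity>" .
  qed
  define \<gamma> where "\<gamma> = distr \<mu> borel (\<lambda>x. (x, \<psi> x))"
  have fstm: "fst \<in> measurable (borel :: ((real^'n) \<times> (real^'n)) measure) borel"
    using measurable_fst[of "borel :: (real^'n) measure" "borel :: (real^'n) measure"] by (simp add: borel_prod)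
  have sndm: "snd \<in> measurable (borel :: ((real^'n) \<times> (real^'n)) measure) borel"
    using measurable_snd[of "borel :: (real^'n) measure" "borel :: (real^'n) measure"] by (simp add: borel_prod)
  have "\<gamma> \<in> couplings \<mu> (distr \<mu> borel \<psi>)"
    unfolding couplings_def
  proof (intro CollectI conjI)
    show "prob_space \<gamma>" unfolding \<gamma>_def by (rule prob_space.prob_space_distr[OF ps pm2])
    show "sets \<gamma> = sets borel" unfolding \<gamma>_def by simp
    have "distr \<gamma> borel fst = distr \<mu> borel (fst \<circ> (\<lambda>x. (x, \<psi> x)))"
      unfolding \<gamma>_def by (rule distr_distr[OF fstm pm2])
    also have "\<dots> = distr \<mu> borel (\<lambda>x. x)" by (simp add: comp_def)
    also have "\<dots> = \<mu>" by (rule distr_id2) (simp add: sm)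
    finally show "distr \<gamma> borel fst = \<mu>" .
    have "distr \<gamma> borel snd = distr \<mu> borel (snd \<circ> (\<lambda>x. (x, \<psi> x)))"
      unfolding \<gamma>_def by (rule distr_distr[OF sndm pm2])
    then show "distr \<gamma> borel snd = distr \<mu> borel \<psi>" by (simp add: comp_def)
  qed
  moreover have "(\<chi> i j. \<integral> p. fst p $ i * snd p $ j \<partial>\<gamma>) = mat 1"
  proof -
    have "(\<chi> i j. \<integral> p. fst p $ i * snd p $ j \<partial>\<gamma>) $ i $ j = mat 1 $ i $ j" for i j
    proof -
    have im: "(\<lambda>p. fst p $ i * snd p $ j) \<in> borel_measurable (borel :: ((real^'n) \<times> (real^'n)) measure)"
      by (intro borel_measurable_times measurable_compose[OF fstm vn_meas] measurable_compose[OF sndm vn_meas])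
    have "(\<integral> p. fst p $ i * snd p $ j \<partial>\<gamma>) = (\<integral>x. x$i * \<psi> x $ j \<partial>\<mu>)"
      unfolding \<gamma>_def by (subst integral_distr[OF pm2 im]) simp
    then show "(\<chi> i j. \<integral> p. fst p $ i * snd p $ j \<partial>\<gamma>) $ i $ j = mat 1 $ i $ j"
      by (simp add: cross)
    qed
    then show ?thesis by (simp add: vec_eq_iff)
  qed
  ultimately show ?thesis using P2 unfolding transport_duals_def by blast
qed

end

theorem mainTheorem1:
  fixes \<mu> :: "(real^'n) measure" and h :: "real^'n \<Rightarrow> real^'n"
  assumes "prob_frame \<mu>"
    and "h \<in> borel_measurable borel"
    and "(\<integral>\<^sup>+ x. ennreal ((norm (h x))\<^sup>2) \<partial>\<mu>) < \<infinity>"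
  shows "distr \<mu> borel
           (\<lambda>x. matrix_inv (frame_operator \<mu>) *v x + h x
                 - (\<integral> y. ((matrix_inv (frame_operator \<mu>) *v x) \<bullet> y) *\<^sub>R h y \<partial>\<mu>))
         \<in> transport_duals \<mu>"
proof -
  interpret pf \<mu> h using assms by unfold_locales
  show ?thesis unfolding fun_eq by (rule main)
qed


end
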